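(* Let $K\subset\mathbb{R}^2$ be a convex set such that every closed planar curve of length $1$ can be moved by an isometry of the plane so that it lies inside $K$. Then the area of $K$ is at least $0.0879873$.
   Context: Such a set $K$ is called a convex universal cover for unit closed curves. *)

theory Defs
  imports "HOL-Analysis.Analysis"
begin

definition polygonal_lengths :: "(real \<Rightarrow> 'a::metric_space) \<Rightarrow> real set" where
  "polygonal_lengths g =
     {(\<Sum>i<n. dist (g (t i)) (g (t (Suc i)))) | t n.
        t 0 = 0 \<and> t n = 1 \<and> (\<forall>i<n. t i \<le> t (Suc i))}"

definition rectifiable_path :: "(real \<Rightarrow> 'a::metric_space) \<Rightarrow> bool" where
  "rectifiable_path g \<longleftrightarrow> path g \<and> bdd_above (polygonal_lengths g)"

definition curve_length :: "(real \<Rightarrow> 'a::metric_space) \<Rightarrow> real" where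
  "curve_length g = Sup (polygonal_lengths g)"

text \<open>Isometry of a metric space onto itself (distance preserving; in the
  Euclidean plane such maps are automatically surjective).\<close>
definition isometry :: "('a::metric_space \<Rightarrow> 'a) \<Rightarrow> bool" where
  "isometry f \<longleftrightarrow> (\<forall>x y. dist (f x) (f y) = dist x y)"

end

theory Submission
  imports Defs
begin

lemma poly_le_1:
  fixes g :: "real \<Rightarrow> 'a::metric_space"
  assumes L: "\<And>s t. dist (g s) (g t) \<le> \<bar>s - t\<bar>" and x: "x \<in> polygonal_lengths g"
  shows "x \<le> 1"
proof -
  obtain t n where x: "x = (\<Sum>i<n. dist (g (t i)) (g (t (Suc i))))"
    and t: "t 0 = 0" "t n = 1" "\<forall>i<n. t i \<le> t (Suc i)"
    using x unfolding polygonal_lengths_def by blast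
  have "x \<le> (\<Sum>i<n. t (Suc i) - t i)"
    unfolding x
  proof (rule sum_mono)
    fix i assume "i \<in> {..<n}"
    then have "t i \<le> t (Suc i)" using t by auto
    then show "dist (g (t i)) (g (t (Suc i))) \<le> t (Suc i) - t i"
      using L[of "t i" "t (Suc i)"] by simp
  qed
  also have "\<dots> = t n - t 0" by (rule sum_lessThan_telescope)
  finally show ?thesis using t by simp
qed

lemma bdd_poly:
  fixes g :: "real \<Rightarrow> 'a::metric_space"
  assumes L: "\<And>s t. dist (g s) (g t) \<le> \<bar>s - t\<bar>"
  shows "bdd_above (polygonal_lengths g)"
  using poly_le_1[OF L] by (intro bdd_aboveI) auto

definition seg :: "real \<Rightarrow> real^2" where
  "seg t = (1/2 - \<bar>t - 1/2\<bar>) *\<^sub>R axis 1 1"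

lemma seg_lip: "dist (seg s) (seg t) \<le> \<bar>s - t\<bar>"
proof -
  have "dist (seg s) (seg t) = \<bar>\<bar>t - 1/2\<bar> - \<bar>s - 1/2\<bar>\<bar>"
    unfolding seg_def dist_norm by (simp add: scaleR_diff_left[symmetric] norm_axis_1)
  also have "\<dots> \<le> \<bar>s - t\<bar>" by linarith
  finally show ?thesis .
qed

lemma seg_props: "rectifiable_path seg" "pathfinish seg = pathstart seg" "curve_length seg = 1"
proof -
  have "path seg" unfolding path_def seg_def by (intro continuous_intros)
  then show "rectifiable_path seg" unfolding rectifiable_path_def using bdd_poly[OF seg_lip] by simp
  show "pathfinish seg = pathstart seg" by (simp add: pathfinish_def pathstart_def seg_def)
  have "1 \<in> polygonal_lengths seg"
  proof -
    have "(\<Sum>i<2. dist (seg (real i / 2)) (seg (real (Suc i) / 2))) = 1"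
      by (simp add: numeral_2_eq_2 seg_def dist_norm norm_axis_1 scaleR_diff_left[symmetric])
    then show ?thesis unfolding polygonal_lengths_def
      by (intro CollectI exI[of _ "\<lambda>i. real i / 2"] exI[of _ 2]) auto
  qed
  then show "curve_length seg = 1" unfolding curve_length_def
    using poly_le_1[OF seg_lip] by (intro cSup_eq_maximum) auto
qed

lemma inner2: "(x::real^2) \<bullet> y = x$1 * y$1 + x$2 * y$2"
  by (simp add: inner_vec_def sum_2)

lemma dist2: "dist (x::real^2) y = sqrt ((x$1 - y$1)^2 + (x$2 - y$2)^2)"
  by (simp add: dist_norm norm_eq_sqrt_inner inner2 power2_eq_square)

definition rc :: real where "rc = 1 / (2 * pi)"

definition circ :: "real \<Rightarrow> real^2" where
  "circ t = (\<chi> i. if i = 1 then rc * cos (2*pi*t) else rc * sin (2*pi*t))"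

lemma circ1 [simp]: "circ t $ 1 = rc * cos (2*pi*t)" and circ2 [simp]: "circ t $ 2 = rc * sin (2*pi*t)"
  by (simp_all add: circ_def)

lemma rc_pos: "rc > 0" by (simp add: rc_def)

lemma trig_id: "(cos (a::real) - cos b)^2 + (sin a - sin b)^2 = 4 * (sin ((a - b)/2))^2"
proof -
  have "(cos a - cos b)^2 + (sin a - sin b)^2 = 2 - 2 * cos (a - b)"
    by (simp add: cos_diff power2_eq_square algebra_simps)
  also have "cos (a - b) = 1 - 2 * (sin ((a-b)/2))^2"
  proof -
    have h: "2 * ((a-b)/2) = a - b" by simp
    show ?thesis by (metis h cos_double_sin)
  qed
  finally show ?thesis by simp
qed

lemma circ_dist: "dist (circ s) (circ t) = 2 * rc * \<bar>sin (pi * (s - t))\<bar>"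
proof -
  have "(circ s $ 1 - circ t $ 1)^2 + (circ s $ 2 - circ t $ 2)^2
      = rc^2 * ((cos (2 * pi * s) - cos (2 * pi * t))^2 + (sin (2 * pi * s) - sin (2 * pi * t))^2)"
    by (simp only: circ1 circ2 right_diff_distrib[symmetric] power_mult_distrib distrib_left)
  also have "\<dots> = rc^2 * (4 * (sin ((2 * pi * s - 2 * pi * t)/2))^2)" by (simp only: trig_id)
  also have "(2 * pi * s - 2 * pi * t)/2 = pi * (s - t)" by (simp add: field_simps)
  also have "rc^2 * (4 * (sin (pi * (s - t)))^2) = (2 * rc * \<bar>sin (pi * (s - t))\<bar>)^2"
    by (simp add: power_mult_distrib)
  finally show ?thesis unfolding dist2 using rc_pos by simp
qed

lemma circ_lip: "dist (circ s) (circ t) \<le> \<bar>s - t\<bar>"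
proof -
  have "2 * rc * \<bar>sin (pi * (s - t))\<bar> \<le> 2 * rc * \<bar>pi * (s - t)\<bar>"
    using rc_pos abs_sin_x_le_abs_x by (intro mult_left_mono) auto
  also have "\<dots> = \<bar>s - t\<bar>" by (simp add: rc_def abs_mult)
  finally show ?thesis by (simp add: circ_dist)
qed

lemma sinx_lim: "((\<lambda>n. sin (pi / real n) / (pi / real n)) \<longlongrightarrow> 1) sequentially"
proof -
  have d: "((\<lambda>y. sin y / y) \<longlongrightarrow> 1) (at (0::real))"
    using DERIV_sin[of 0] unfolding has_field_derivative_iff by simp
  have h: "filterlim (\<lambda>n. pi / real n) (at 0) sequentially"
    unfolding filterlim_at
  proof
    show "\<forall>\<^sub>F x in sequentially. pi / real x \<in> UNIV \<and> pi / real x \<noteq> 0"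
      using eventually_gt_at_top[of "0::nat"] by eventually_elim simp
    show "((\<lambda>n. pi / real n) \<longlongrightarrow> 0) sequentially" by (rule lim_const_over_n)
  qed
  show ?thesis using filterlim_compose[OF d h] by (simp add: o_def)
qed

lemma circ_props: "rectifiable_path circ" "pathfinish circ = pathstart circ" "curve_length circ = 1"
proof -
  have "path circ" unfolding path_def circ_def
  proof (intro continuous_on_vec_lambda)
    fix i :: 2
    show "continuous_on {0..1} (\<lambda>x. if i = 1 then rc * cos (2 * pi * x) else rc * sin (2 * pi * x))"
      by (cases "i = 1") (auto intro!: continuous_intros)
  qed
  then show "rectifiable_path circ" unfolding rectifiable_path_def using bdd_poly[OF circ_lip] by simp
  show "pathfinish circ = pathstart circ"
    by (simp add: pathfinish_def pathstart_def vec_eq_iff forall_2)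
  have mem: "sin (pi / real n) / (pi / real n) \<in> polygonal_lengths circ" if n: "n \<ge> 1" for n
  proof -
    have s: "sin (pi / real n) \<ge> 0" using n by (intro sin_ge_zero) (auto simp: field_simps)
    have e: "dist (circ (real i / real n)) (circ (real (Suc i) / real n)) = 2 * rc * sin (pi / real n)" for i
    proof -
      have "pi * (real i / real n - real (Suc i) / real n) = - (pi / real n)"
        using n by (simp add: field_simps)
      then show ?thesis using s by (simp add: circ_dist)
    qed
    have "(\<Sum>i<n. dist (circ (real i / real n)) (circ (real (Suc i) / real n)))
        = real n * (2 * rc * sin (pi / real n))" by (simp only: e sum_constant card_lessThan)
    also have "\<dots> = sin (pi / real n) / (pi / real n)"
      using n by (simp add: rc_def)
    finally have "(\<Sum>i<n. dist (circ (real i / real n)) (circ (real (Suc i) / real n)))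
        = sin (pi / real n) / (pi / real n)" .
    then show ?thesis unfolding polygonal_lengths_def using n
      by (intro CollectI exI[of _ "\<lambda>i. real i / real n"] exI[of _ n])
         (auto simp: divide_right_mono)
  qed
  have bdd: "bdd_above (polygonal_lengths circ)" by (rule bdd_poly[OF circ_lip])
  have ne: "polygonal_lengths circ \<noteq> {}" using mem[of 1] by auto
  have le: "curve_length circ \<le> 1" unfolding curve_length_def
    using poly_le_1[OF circ_lip] ne by (intro cSup_least) auto
  have ge: "1 \<le> curve_length circ" unfolding curve_length_def
    by (rule LIMSEQ_le_const2[OF sinx_lim], rule exI[of _ 1], intro allI impI cSup_upper mem bdd)
  show "curve_length circ = 1" using le ge by simp
qed

lemma circ_image: "sphere 0 rc \<subseteq> path_image circ"
proof
  fix y :: "real^2" assume "y \<in> sphere 0 rc"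
  then have "norm y = rc" by simp
  then have "(y$1)^2 + (y$2)^2 = rc^2"
  proof -
    have "(norm y)^2 = y \<bullet> y" by (rule power2_norm_eq_inner)
    then have "(y$1)^2 + (y$2)^2 = (norm y)^2" by (simp add: inner2 power2_eq_square)
    then show ?thesis using \<open>norm y = rc\<close> by simp
  qed
  then have "(y$1/rc)^2 + (y$2/rc)^2 = 1" using rc_pos by (simp add: field_simps power2_eq_square)
  then obtain th where th: "0 \<le> th" "th < 2*pi" "y$1/rc = cos th" "y$2/rc = sin th"
    by (rule sincos_total_2pi)
  have "y = circ (th / (2*pi))"
    using th rc_pos by (simp add: vec_eq_iff forall_2 field_simps)
  moreover have "th / (2*pi) \<in> {0..1}" using th by auto
  ultimately show "y \<in> path_image circ" unfolding path_image_def by blast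
qed

lemma norm2: "norm (x::real^2) = sqrt ((x$1)^2 + (x$2)^2)"
  by (simp add: norm_eq_sqrt_inner inner2 power2_eq_square)

lemma tri:
  fixes c p :: "real^2" and K :: "(real^2) set" and r :: real
  assumes K: "convex K" "sphere c r \<subseteq> K" "p \<in> K" and r: "r > 0" and dr: "norm (p - c) > r"
  shows "\<exists>T. T \<subseteq> K \<and> T \<in> lmeasurable \<and>
     measure lebesgue T = 0.8 * r * (norm (p - c) - r)^2 / (norm (p - c) - 0.6 * r) \<and>
     T \<inter> ball c r = {} \<and>
     (\<forall>z. norm z = 1 \<longrightarrow> z \<bullet> (p - c) < 0 \<longrightarrow> (\<forall>x\<in>T. (x - c) \<bullet> z < (x - c) \<bullet> (p - c) / norm (p - c)))"
proof -
  define d where "d = norm (p - c)"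
  have dpos: "d > 0" and dr': "d > r" using dr r by (auto simp: d_def)
  define u :: "real^2" where "u = (1/d) *\<^sub>R (p - c)"
  have pu: "p = c + d *\<^sub>R u" using dpos by (simp add: u_def)
  have nu: "norm u = 1" using dpos by (simp add: u_def d_def)
  have uu: "(u$1)^2 + (u$2)^2 = 1" using nu by (simp add: norm2)
  define v :: "real^2" where "v = (\<chi> i. if i = 1 then - u$2 else u$1)"
  have v1 [simp]: "v$1 = - u$2" and v2 [simp]: "v$2 = u$1" by (simp_all add: v_def)
  have nv: "norm v = 1" using uu by (simp add: norm2 add.commute)
  have uv: "u \<bullet> v = 0" by (simp add: inner2)
  have uu': "u \<bullet> u = 1" using uu by (simp add: inner2 power2_eq_square)
  define l where "l = (d - r) / (d - 0.6 * r)"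
  have l0: "0 < l" and l1: "l < 1" using dr' r by (auto simp: l_def field_simps)
  have lh: "l * (d - 0.6 * r) = d - r" using dr' r by (simp add: l_def)
  have F: "(1 - l) * d + 0.6 * l * r = r" using lh by (simp add: algebra_simps)
  define s where "s = 0.8 * l * r"
  have s0: "0 < s" and sr: "s < r" using l0 l1 r by (auto simp: s_def)
  define t1 :: "real^2" where "t1 = c + r *\<^sub>R (0.6 *\<^sub>R u + 0.8 *\<^sub>R v)"
  define t2 :: "real^2" where "t2 = c + r *\<^sub>R (0.6 *\<^sub>R u - 0.8 *\<^sub>R v)"
  define a1 :: "real^2" where "a1 = c + r *\<^sub>R u + s *\<^sub>R v"
  define a2 :: "real^2" where "a2 = c + r *\<^sub>R u - s *\<^sub>R v"
  have t1K: "t1 \<in> K" and t2K: "t2 \<in> K"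
  proof -
    have "norm (0.6 *\<^sub>R u + 0.8 *\<^sub>R v) = 1" "norm (0.6 *\<^sub>R u - 0.8 *\<^sub>R v) = 1"
      using uu by (simp_all add: norm2 power2_eq_square algebra_simps)
    then have "t1 \<in> sphere c r" "t2 \<in> sphere c r" using r by (simp_all add: t1_def t2_def dist_norm)
    then show "t1 \<in> K" "t2 \<in> K" using K by auto
  qed
  have a1e: "a1 = (1 - l) *\<^sub>R p + l *\<^sub>R t1" and a2e: "a2 = (1 - l) *\<^sub>R p + l *\<^sub>R t2"
  proof -
    have e: "(1 - l) * (d * x) + l * (r * (0.6 * x)) = r * x" for x
      using arg_cong[OF F, of "\<lambda>y. y * x"] by (simp add: algebra_simps)
    show "a1 = (1 - l) *\<^sub>R p + l *\<^sub>R t1" "a2 = (1 - l) *\<^sub>R p + l *\<^sub>R t2"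
      unfolding a1_def a2_def t1_def t2_def pu s_def using e[of "u$1"] e[of "u$2"]
      by (simp_all add: vec_eq_iff forall_2 algebra_simps)
  qed
  have a1K: "a1 \<in> K" and a2K: "a2 \<in> K"
    using convexD[OF K(1) K(3) t1K, of "1 - l" l] convexD[OF K(1) K(3) t2K, of "1 - l" l] l0 l1
    by (auto simp: a1e a2e)
  define T where "T = convex hull {p, a1, a2}"
  have TK: "T \<subseteq> K" unfolding T_def using K a1K a2K by (intro hull_minimal) auto
  have Tm: "T \<in> lmeasurable" unfolding T_def
    by (intro measurable_convex convex_convex_hull finite_imp_bounded_convex_hull) auto
  have "measure lborel T = s * (d - r)"
  proof -
    have "measure lborel T = \<bar>(a2 $ 1 - p $ 1) * (a1 $ 2 - p $ 2) - (a1 $ 1 - p $ 1) * (a2 $ 2 - p $ 2)\<bar> / 2"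
      unfolding T_def by (rule content_triangle)
    also have "(a2 $ 1 - p $ 1) * (a1 $ 2 - p $ 2) - (a1 $ 1 - p $ 1) * (a2 $ 2 - p $ 2)
        = 2 * s * (r - d) * ((u$1)^2 + (u$2)^2)"
      unfolding a1_def a2_def pu by (simp add: algebra_simps power2_eq_square)
    finally show ?thesis using uu s0 dr' by (simp add: abs_mult)
  qed
  moreover have "measure lebesgue T = measure lborel T"
    unfolding T_def by (intro measure_completion) (auto intro!: borel_compact finite_imp_compact_convex_hull)
  moreover have "s * (d - r) = 0.8 * r * (d - r)^2 / (d - 0.6 * r)"
    using dr' r by (simp add: s_def l_def power2_eq_square field_simps)
  ultimately have meas: "measure lebesgue T = 0.8 * r * (d - r)^2 / (d - 0.6 * r)" by simp
  have half: "\<forall>x\<in>T. r \<le> (x - c) \<bullet> u"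
  proof -
    have "T \<subseteq> {x. r + u \<bullet> c \<le> u \<bullet> x}" unfolding T_def
    proof (intro hull_minimal convex_halfspace_ge)
      have "u \<bullet> p = d + u \<bullet> c" using nu uu' by (simp add: pu inner_add_right)
      moreover have "u \<bullet> a1 = r + u \<bullet> c" "u \<bullet> a2 = r + u \<bullet> c"
        using uu' uv by (simp_all add: a1_def a2_def inner_diff_right inner_add_right)
      ultimately show "{p, a1, a2} \<subseteq> {x. r + u \<bullet> c \<le> u \<bullet> x}"
        using dr' by auto
    qed
    moreover have "(x - c) \<bullet> u = u \<bullet> x - u \<bullet> c" for x by (simp add: inner_commute[of "x - c" u] inner_diff_right)
    ultimately show ?thesis by fastforce
  qed
  have disj: "T \<inter> ball c r = {}"
  proof -
    have "(x - c) \<bullet> u < r" if "x \<in> ball c r" for x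
    proof -
      have "(x - c) \<bullet> u \<le> norm (x - c) * norm u" by (rule norm_cauchy_schwarz)
      also have "\<dots> < r" using that nu by (simp add: dist_norm norm_minus_commute)
      finally show ?thesis .
    qed
    then show ?thesis using half by force
  qed
  have sep: "\<forall>x\<in>T. (x - c) \<bullet> z < (x - c) \<bullet> u" if z: "norm z = 1" "z \<bullet> (p - c) < 0" for z
  proof -
    have uz: "u \<bullet> z < 0" using z dpos by (simp add: u_def inner_commute divide_neg_pos)
    have "\<bar>v \<bullet> z\<bar> \<le> 1" using Cauchy_Schwarz_ineq2[of v z] nv z by simp
    then have vz: "v \<bullet> z \<le> 1" "- (v \<bullet> z) \<le> 1" by auto
    have "T \<subseteq> {x. (u - z) \<bullet> c < (u - z) \<bullet> x}" unfolding T_def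
    proof (intro hull_minimal convex_halfspace_gt)
      have "(p - c) \<bullet> z < (p - c) \<bullet> u" using uz dpos nu uu'
        by (simp add: pu inner_commute mult_neg_pos)
      moreover have "(a1 - c) \<bullet> z < (a1 - c) \<bullet> u"
      proof -
        have "(a1 - c) \<bullet> z = r * (u \<bullet> z) + s * (v \<bullet> z)"
          by (simp add: a1_def inner_add_left)
        also have "\<dots> < r" proof -
          have "s * (v \<bullet> z) \<le> s * 1" using mult_left_mono[OF vz(1), of s] s0 by linarith
          then show ?thesis using mult_pos_neg[OF r uz] sr by linarith
        qed
        also have "r = (a1 - c) \<bullet> u" using uu' uv by (simp add: a1_def inner_add_left inner_add_right inner_commute)
        finally show ?thesis .
      qed
      moreover have "(a2 - c) \<bullet> z < (a2 - c) \<bullet> u"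
      proof -
        have "(a2 - c) \<bullet> z = r * (u \<bullet> z) - s * (v \<bullet> z)"
          by (simp add: a2_def inner_diff_left inner_add_left)
        also have "\<dots> < r" proof -
          have "s * (- (v \<bullet> z)) \<le> s * 1" using mult_left_mono[OF vz(2), of s] s0 by linarith
          then show ?thesis using mult_pos_neg[OF r uz] sr by linarith
        qed
        also have "r = (a2 - c) \<bullet> u" using uu' uv by (simp add: a2_def inner_diff_left inner_add_left inner_diff_right inner_add_right inner_commute)
        finally show ?thesis .
      qed
      ultimately show "{p, a1, a2} \<subseteq> {x. (u - z) \<bullet> c < (u - z) \<bullet> x}"
        by (auto simp: inner_diff_left inner_diff_right inner_commute)
    qed
    then show ?thesis by (auto simp: inner_diff_left inner_diff_right inner_commute)
  qed
  have "\<forall>x. (x - c) \<bullet> (p - c) / norm (p - c) = (x - c) \<bullet> u"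
    by (simp add: u_def d_def)
  then show ?thesis using TK Tm meas disj sep unfolding d_def by (intro exI[of _ T]) auto
qed

lemma iso_sphere:
  fixes f :: "real^2 \<Rightarrow> real^2"
  assumes "isometry f"
  shows "sphere (f 0) r \<subseteq> f ` sphere 0 r"
proof
  fix z assume z: "z \<in> sphere (f 0) r"
  define L where "L = (\<lambda>x. f x - f 0)"
  have dL: "\<forall>x y. dist (L x) (L y) = dist x y"
    using assms unfolding isometry_def L_def by (simp add: dist_norm)
  have "orthogonal_transformation L"
    unfolding orthogonal_transformation_isometry using dL by (simp add: L_def)
  then have "surj L" and nL: "\<And>x. norm (L x) = norm x"
    by (auto simp: orthogonal_transformation_surj orthogonal_transformation_norm)
  then obtain y where y: "L y = z - f 0" by (metis surjD)
  have "norm y = r" using nL[of y] y z by (simp add: dist_norm norm_minus_commute)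
  moreover have "f y = z" using y by (simp add: L_def)
  ultimately show "z \<in> f ` sphere 0 r" by force
qed

lemma ball_sub:
  fixes c :: "real^2"
  assumes "convex K" "sphere c r \<subseteq> K" "r > 0"
  shows "ball c r \<subseteq> K"
proof -
  have "cball c r = convex hull (frontier (cball c r))"
    by (rule Krein_Milman_frontier) auto
  also have "frontier (cball c r) = sphere c r" using assms by simp
  finally have "cball c r \<subseteq> K" using assms by (metis hull_minimal)
  then show ?thesis by auto
qed

lemma K_meas:
  fixes K :: "(real^2) set"
  assumes "convex K"
  shows "K \<in> sets lebesgue"
proof -
  have "K = (\<Union>n::nat. K \<inter> ball 0 (real n))"
    by (auto simp: dist_norm) (meson reals_Archimedean2)
  moreover have "K \<inter> ball 0 (real n) \<in> sets lebesgue" for n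
    using measurable_convex[of "K \<inter> ball 0 (real n)"] assms by (auto intro: convex_Int bounded_Int)
  then have "(\<Union>n::nat. K \<inter> ball 0 (real n)) \<in> sets lebesgue" by (intro sets.countable_UN) auto
  ultimately show ?thesis by simp
qed

lemma meas_bound:
  assumes "S \<in> lmeasurable" "S \<subseteq> K" "K \<in> sets lebesgue" "x \<le> measure lebesgue S"
  shows "ennreal x \<le> emeasure lebesgue K"
proof -
  have "ennreal x \<le> ennreal (measure lebesgue S)" using assms(4) by (rule ennreal_leI)
  also have "\<dots> = emeasure lebesgue S" using assms(1) by (simp add: emeasure_eq_measure2)
  also have "\<dots> \<le> emeasure lebesgue K" using assms by (intro emeasure_mono) auto
  finally show ?thesis .
qed

lemma meas_Un:
  assumes "A \<in> lmeasurable" "B \<in> lmeasurable" "A \<inter> B = {}"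
  shows "measure lebesgue (A \<union> B) = measure lebesgue A + measure lebesgue B"
  using measure_Un3[OF assms(1,2)] assms(3) by simp

lemma ball_meas: "measure lebesgue (ball (c::real^2) rc) = rc^2 * pi"
proof -
  have "measure lebesgue (ball c rc) = measure lborel (ball c rc)"
    by (intro measure_completion) auto
  also have "\<dots> = rc^2 * pi" using rc_pos circle_area by auto
  finally show ?thesis .
qed

lemma rc_b: "(15915/100000) \<le> rc" "rc \<le> (15916/100000)" "(795/10000) \<le> rc^2 * pi"
  using pi_approx by (auto simp: rc_def field_simps power2_eq_square)

lemma A_big:
  fixes d :: real
  assumes dd: "(27/100) \<le> d"
  shows "(89/10000) \<le> (8/10)*rc*(d - rc)^2/(d - (6/10)*rc)"
proof -
  have r: "(15915/100000) \<le> rc" "rc \<le> (15916/100000)" by (rule rc_b)+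
  have pos: "d - (6/10)*rc > 0" using r dd by linarith
  have q1: "(d - (15916/100000))^2 \<le> (d - rc)^2" using r dd by (intro power_mono) auto
  have q2: "(8/10)*(15915/100000)*(d - (15916/100000))^2 \<le> (8/10)*rc*(d - (15916/100000))^2"
    using r by (intro mult_right_mono) auto
  have q3: "(8/10)*rc*(d - (15916/100000))^2 \<le> (8/10)*rc*(d - rc)^2"
    using r q1 by (intro mult_left_mono) auto
  have h1: "(8/10)*(15915/100000)*(d - (15916/100000))^2 \<le> (8/10)*rc*(d - rc)^2"
    using q2 q3 by linarith
  define e where "e = d - (27/100)"
  have e0: "e \<ge> 0" using dd by (simp add: e_def)
  have de: "d = (27/100) + e" by (simp add: e_def)
  have id: "(d - (15916/100000))^2 = ((27/100) - (15916/100000))^2 + 2*((27/100) - (15916/100000))*e + e^2"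
    unfolding de by (simp add: power2_eq_square algebra_simps)
  have ee: "e^2 \<ge> 0" by simp
  have h3: "(89/10000) * (d - (6/10)*rc) \<le> (89/10000) * (d - (6/10)*(15915/100000))" using r by simp
  have h2: "(89/10000) * (d - (6/10)*(15915/100000)) \<le> (8/10)*(15915/100000)*(d - (15916/100000))^2"
  proof -
    have E: "0 \<le> e * (e * 3183) / 25000" using e0 by simp
    show ?thesis unfolding id de
      apply (simp add: power2_eq_square algebra_simps)
      using E e0 by linarith
  qed
  show ?thesis using pos h1 h2 h3 by (simp add: pos_le_divide_eq)
qed

lemma A_small:
  fixes d :: real
  assumes dd: "(23/100) \<le> d"
  shows "(445/100000) \<le> (8/10)*rc*(d - rc)^2/(d - (6/10)*rc)"
proof -
  have r: "(15915/100000) \<le> rc" "rc \<le> (15916/100000)" by (rule rc_b)+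
  have pos: "d - (6/10)*rc > 0" using r dd by linarith
  have q1: "(d - (15916/100000))^2 \<le> (d - rc)^2" using r dd by (intro power_mono) auto
  have q2: "(8/10)*(15915/100000)*(d - (15916/100000))^2 \<le> (8/10)*rc*(d - (15916/100000))^2"
    using r by (intro mult_right_mono) auto
  have q3: "(8/10)*rc*(d - (15916/100000))^2 \<le> (8/10)*rc*(d - rc)^2"
    using r q1 by (intro mult_left_mono) auto
  have h1: "(8/10)*(15915/100000)*(d - (15916/100000))^2 \<le> (8/10)*rc*(d - rc)^2"
    using q2 q3 by linarith
  define e where "e = d - (23/100)"
  have e0: "e \<ge> 0" using dd by (simp add: e_def)
  have de: "d = (23/100) + e" by (simp add: e_def)
  have id: "(d - (15916/100000))^2 = ((23/100) - (15916/100000))^2 + 2*((23/100) - (15916/100000))*e + e^2"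
    unfolding de by (simp add: power2_eq_square algebra_simps)
  have ee: "e^2 \<ge> 0" by simp
  have h3: "(445/100000) * (d - (6/10)*rc) \<le> (445/100000) * (d - (6/10)*(15915/100000))" using r by simp
  have h2: "(445/100000) * (d - (6/10)*(15915/100000)) \<le> (8/10)*(15915/100000)*(d - (15916/100000))^2"
  proof -
    have E: "0 \<le> e * (e * 3183) / 25000" using e0 by simp
    show ?thesis unfolding id de
      apply (simp add: power2_eq_square algebra_simps)
      using E e0 by linarith
  qed
  show ?thesis using pos h1 h2 h3 by (simp add: pos_le_divide_eq)
qed

theorem mainTheorem2:
  fixes K :: "(real^2) set"
  assumes "convex K"
    and "\<And>g :: real \<Rightarrow> real^2.
           \<lbrakk>rectifiable_path g; pathfinish g = pathstart g; curve_length g = 1\<rbrakk>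
           \<Longrightarrow> \<exists>f. isometry f \<and> f ` path_image g \<subseteq> K"
  shows "emeasure lebesgue K \<ge> ennreal 0.0879873"
proof -
  obtain f1 where f1: "isometry f1" "f1 ` path_image circ \<subseteq> K" using assms(2)[OF circ_props] by blast
  define c where "c = f1 0"
  have sphK: "sphere c rc \<subseteq> K" using iso_sphere[OF f1(1), of rc] circ_image f1(2) unfolding c_def by blast
  have ballK: "ball c rc \<subseteq> K" using ball_sub[OF assms(1) sphK rc_pos] .
  obtain f2 where f2: "isometry f2" "f2 ` path_image seg \<subseteq> K" using assms(2)[OF seg_props] by blast
  define p where "p = f2 (seg 0)"
  define q where "q = f2 (seg (1/2))"
  have "seg 0 \<in> path_image seg" "seg (1/2) \<in> path_image seg" unfolding path_image_def by auto
  then have pK: "p \<in> K" and qK: "q \<in> K" using f2(2) by (auto simp: p_def q_def)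
  have pq: "dist p q = 1/2" using f2(1) unfolding isometry_def p_def q_def
    by (simp add: seg_def dist_norm)
  have Km: "K \<in> sets lebesgue" by (rule K_meas[OF assms(1)])
  define d1 where "d1 = norm (p - c)"
  define d2 where "d2 = norm (q - c)"
  have sum: "1/2 \<le> d1 + d2" using dist_triangle2[of p q c] pq by (simp add: d1_def d2_def dist_norm)
  have r: "(15915/100000) \<le> rc" "rc \<le> (15916/100000)" "(795/10000) \<le> rc^2 * pi" by (rule rc_b)+
  have bm: "ball c rc \<in> lmeasurable" by simp
  have goal: "ennreal 0.0879873 \<le> emeasure lebesgue K" if "0.0879873 \<le> measure lebesgue S" "S \<in> lmeasurable" "S \<subseteq> K" for S
    using meas_bound[OF that(2,3) Km that(1)] .
  have one: "ennreal 0.0879873 \<le> emeasure lebesgue K" if x: "x \<in> K" "27/100 \<le> norm (x - c)" for x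
  proof -
    obtain T where T: "T \<subseteq> K" "T \<in> lmeasurable"
      "measure lebesgue T = 0.8 * rc * (norm (x - c) - rc)^2 / (norm (x - c) - 0.6 * rc)"
      "T \<inter> ball c rc = {}"
      using tri[OF assms(1) sphK x(1) rc_pos] x r by auto
    have "89/10000 \<le> measure lebesgue T" using T(3) A_big[OF x(2)] by simp
    moreover have "measure lebesgue (ball c rc \<union> T) = rc^2 * pi + measure lebesgue T"
      using meas_Un[OF bm T(2)] T(4) ball_meas by auto
    ultimately have "0.0879873 \<le> measure lebesgue (ball c rc \<union> T)" using r by simp
    moreover have "ball c rc \<union> T \<in> lmeasurable" using bm T(2) by (rule fmeasurable.Un)
    moreover have "ball c rc \<union> T \<subseteq> K" using T ballK by auto
    ultimately show ?thesis by (rule goal)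
  qed
  show ?thesis
  proof (cases "27/100 \<le> d1 \<or> 27/100 \<le> d2")
    case True
    then show ?thesis using one pK qK by (auto simp: d1_def d2_def)
  next
    case False
    then have lt: "d1 < 27/100" "d2 < 27/100" by auto
    then have gt: "23/100 \<le> d1" "23/100 \<le> d2" using sum by auto
    have n1: "d1 > rc" "d2 > rc" using gt r by auto
    obtain T1 where T1: "T1 \<subseteq> K" "T1 \<in> lmeasurable"
      "measure lebesgue T1 = 0.8 * rc * (d1 - rc)^2 / (d1 - 0.6 * rc)"
      "T1 \<inter> ball c rc = {}"
      "\<forall>z. norm z = 1 \<longrightarrow> z \<bullet> (p - c) < 0 \<longrightarrow> (\<forall>x\<in>T1. (x - c) \<bullet> z < (x - c) \<bullet> (p - c) / d1)"
      using tri[OF assms(1) sphK pK rc_pos] n1 unfolding d1_def by auto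
    obtain T2 where T2: "T2 \<subseteq> K" "T2 \<in> lmeasurable"
      "measure lebesgue T2 = 0.8 * rc * (d2 - rc)^2 / (d2 - 0.6 * rc)"
      "T2 \<inter> ball c rc = {}"
      "\<forall>z. norm z = 1 \<longrightarrow> z \<bullet> (q - c) < 0 \<longrightarrow> (\<forall>x\<in>T2. (x - c) \<bullet> z < (x - c) \<bullet> (q - c) / d2)"
      using tri[OF assms(1) sphK qK rc_pos] n1 unfolding d2_def by auto
    have neg: "(p - c) \<bullet> (q - c) < 0"
    proof -
      have g: "(norm (a - b))^2 = (norm a)^2 + (norm b)^2 - 2 * (a \<bullet> b)" for a b :: "real^2"
        unfolding power2_norm_eq_inner
        by (simp add: inner_diff_left inner_diff_right inner_commute[of b a])
      have "(norm ((p - c) - (q - c)))^2 = d1^2 + d2^2 - 2 * ((p - c) \<bullet> (q - c))"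
        unfolding d1_def d2_def by (rule g)
      moreover have "(norm ((p - c) - (q - c)))^2 = 1/4"
      proof -
        have "norm ((p - c) - (q - c)) = 1/2" using pq by (simp add: dist_norm)
        then show ?thesis by (simp only:) (simp add: power2_eq_square)
      qed
      moreover have "(27/100::real)^2 = 729/10000" by (simp add: power2_eq_square)
      moreover have "d1^2 < (27/100)^2" "d2^2 < (27/100)^2"
        using lt gt by (intro power_strict_mono; simp)+
      ultimately show ?thesis by linarith
    qed
    have d0: "d1 > 0" "d2 > 0" using gt by auto
    define z1 where "z1 = (1/d1) *\<^sub>R (p - c)"
    define z2 where "z2 = (1/d2) *\<^sub>R (q - c)"
    have nz: "norm z1 = 1" "norm z2 = 1" using d0 by (simp_all add: z1_def z2_def d1_def d2_def)
    have zz: "z2 \<bullet> (p - c) < 0" "z1 \<bullet> (q - c) < 0"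
      using neg d0 by (simp_all add: z1_def z2_def inner_commute divide_neg_pos)
    have a1: "\<forall>x\<in>T1. (x - c) \<bullet> z2 < (x - c) \<bullet> (p - c) / d1" using T1(5) nz(2) zz(1) by blast
    have a2: "\<forall>x\<in>T2. (x - c) \<bullet> z1 < (x - c) \<bullet> (q - c) / d2" using T2(5) nz(1) zz(2) by blast
    have e1: "(x - c) \<bullet> z1 = (x - c) \<bullet> (p - c) / d1" "(x - c) \<bullet> z2 = (x - c) \<bullet> (q - c) / d2" for x
      by (simp_all add: z1_def z2_def)
    have s1: "\<forall>x\<in>T1. (x - c) \<bullet> (q - c) / d2 < (x - c) \<bullet> (p - c) / d1" using a1 e1 by simp
    have s2: "\<forall>x\<in>T2. (x - c) \<bullet> (p - c) / d1 < (x - c) \<bullet> (q - c) / d2" using a2 e1 by simp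
    have dj: "T1 \<inter> T2 = {}" using s1 s2 by fastforce
    have "445/100000 \<le> measure lebesgue T1" using T1(3) A_small[OF gt(1)] by simp
    moreover have "445/100000 \<le> measure lebesgue T2" using T2(3) A_small[OF gt(2)] by simp
    moreover have "measure lebesgue (ball c rc \<union> T1) = rc^2 * pi + measure lebesgue T1"
      using meas_Un[OF bm T1(2)] T1(4) ball_meas by auto
    moreover have "measure lebesgue ((ball c rc \<union> T1) \<union> T2) = measure lebesgue (ball c rc \<union> T1) + measure lebesgue T2"
      using T1(2) T2(2) T2(4) dj by (intro meas_Un) auto
    ultimately have "0.0879873 \<le> measure lebesgue ((ball c rc \<union> T1) \<union> T2)" using r by simp
    moreover have "(ball c rc \<union> T1) \<union> T2 \<in> lmeasurable" using bm T1(2) T2(2) by (intro fmeasurable.Un)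
    moreover have "(ball c rc \<union> T1) \<union> T2 \<subseteq> K" using T1 T2 ballK by auto
    ultimately show ?thesis by (rule goal)
  qed
qed

end
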